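(* Let $Q\succeq0$, $q\in\mathbb{R}^n$, $A\succ0$, $v\in\mathbb{R}^n$, and let $m>0$ satisfy Requirement 1 (see context). For $k\in\mathbb{N}$ let $x_k^\star$ be the unique minimizer of $J_k$ over $\mathbb{R}^n$. Then: (1) $x_k^\star\in\mathcal{C}$ for every $k\in\mathbb{N}$; (2) $x_k^\star\to x^\star$ as $k\to\infty$, where $x^\star=\arg\min_{x\in\mathcal{X}^\star}g(x)$ is the (unique) minimizer of $g$ over the solution set $\mathcal{X}^\star$ of the constrained problem; in particular $x^\star\in\mathcal{X}^\star$.
   Context: $Q\in\mathbb{R}^{n\times n}$ symmetric positive semidefinite, $A\in\mathbb{R}^{n\times n}$ symmetric positive definite. $f(x)=\tfrac12 x^\top Qx+q^\top x$, $g(x)=(x-v)^\top A(x-v)$, $\mathcal{C}=\{x: g(x)\le1\}$, $\partial\mathcal{C}=\{x:g(x)=1\}$. The constrained problem is $\min_{x\in\mathcal{C}} f(x)$ with (nonempty, compact, convex) solution set $\mathcal{X}^\star=\arg\min_{x\in\mathcal{C}}f(x)$. For $k\in\mathbb{N}=\{1,2,\dots\}$: $p_k(x)=\frac{m}{k}g(x)^k$, $J_k(x)=f(x)+p_k(x)$. Requirement 1: $m\ge m_{\min}:=\max(\hat m_{\min},0)$, where $\hat m_{\min}=\max_{x:\,g(x)=1}\; -\frac{\langle\nabla g(x),\nabla f(x)\rangle}{\langle\nabla g(x),\nabla g(x)\rangle}$; equivalently $m\ge0$ and $\langle \nabla g(x),\nabla f(x)+m\nabla g(x)\rangle\ge0$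 for all $x$ with $g(x)=1$. *)

theory Defs
  imports "HOL-Analysis.Analysis"
begin

definition sym_psd :: "real^'n^'n \<Rightarrow> bool" where
  "sym_psd M \<longleftrightarrow> transpose M = M \<and> (\<forall>x. 0 \<le> x \<bullet> (M *v x))"

definition sym_pd :: "real^'n^'n \<Rightarrow> bool" where
  "sym_pd M \<longleftrightarrow> transpose M = M \<and> (\<forall>x. x \<noteq> 0 \<longrightarrow> 0 < x \<bullet> (M *v x))"

definition fobj :: "real^'n^'n \<Rightarrow> real^'n \<Rightarrow> real^'n \<Rightarrow> real" where
  "fobj Q q x = (1/2) * (x \<bullet> (Q *v x)) + q \<bullet> x"

definition gcon :: "real^'n^'n \<Rightarrow> real^'n \<Rightarrow> real^'n \<Rightarrow> real" where
  "gcon A v x = (x - v) \<bullet> (A *v (x - v))"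

text \<open>Gradients (Q, A symmetric): grad f(x) = Q x + q, grad g(x) = 2 A (x - v)\<close>
definition grad_f :: "real^'n^'n \<Rightarrow> real^'n \<Rightarrow> real^'n \<Rightarrow> real^'n" where
  "grad_f Q q x = Q *v x + q"

definition grad_g :: "real^'n^'n \<Rightarrow> real^'n \<Rightarrow> real^'n \<Rightarrow> real^'n" where
  "grad_g A v x = 2 *\<^sub>R (A *v (x - v))"

definition Cset :: "real^'n^'n \<Rightarrow> real^'n \<Rightarrow> (real^'n) set" where
  "Cset A v = {x. gcon A v x \<le> 1}"

definition Xstar :: "real^'n^'n \<Rightarrow> real^'n \<Rightarrow> real^'n^'n \<Rightarrow> real^'n \<Rightarrow> (real^'n) set" where
  "Xstar Q q A v = {x \<in> Cset A v. \<forall>y \<in> Cset A v. fobj Q q x \<le> fobj Q q y}"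

definition Jk :: "real^'n^'n \<Rightarrow> real^'n \<Rightarrow> real^'n^'n \<Rightarrow> real^'n \<Rightarrow> real \<Rightarrow> nat \<Rightarrow> real^'n \<Rightarrow> real" where
  "Jk Q q A v m k x = fobj Q q x + (m / real k) * (gcon A v x) ^ k"

text \<open>Requirement 1 (equivalent pointwise form):
  m \<ge> 0 and <grad g x, grad f x + m grad g x> \<ge> 0 whenever g x = 1.\<close>
definition requirement1 :: "real^'n^'n \<Rightarrow> real^'n \<Rightarrow> real^'n^'n \<Rightarrow> real^'n \<Rightarrow> real \<Rightarrow> bool" where
  "requirement1 Q q A v m \<longleftrightarrow> 0 \<le> m \<and>
     (\<forall>x. gcon A v x = 1 \<longrightarrow>
        0 \<le> grad_g A v x \<bullet> (grad_f Q q x + m *\<^sub>R grad_g A v x))"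

end

theory Submission
  imports Defs
begin

lemma sym_dot:
  fixes M :: "real^'n^'n"
  assumes "transpose M = M"
  shows "x \<bullet> (M *v y) = y \<bullet> (M *v x)"
proof -
  have "x \<bullet> (M *v y) = (x v* M) \<bullet> y" by (simp add: dot_lmul_matrix)
  also have "x v* M = M *v x" by (metis assms vector_transpose_matrix)
  finally show ?thesis by (simp add: inner_commute)
qed

lemma quad_diff:
  fixes M :: "real^'n^'n"
  assumes "transpose M = M"
  shows "a \<bullet> (M *v a) = b \<bullet> (M *v b) + (2 *\<^sub>R (M *v b)) \<bullet> (a - b) + (a - b) \<bullet> (M *v (a - b))"
  using sym_dot[OF assms, of a b]
  by (simp add: matrix_vector_mult_diff_distrib inner_diff_left inner_diff_right inner_commute algebra_simps)

lemma fobj_exp: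
  assumes "sym_psd Q"
  shows "fobj Q q x = fobj Q q y + grad_f Q q y \<bullet> (x - y) + (1/2) * ((x - y) \<bullet> (Q *v (x - y)))"
  using quad_diff[of Q x y] assms
  unfolding sym_psd_def fobj_def grad_f_def
  by (simp add: inner_add_left inner_diff_right algebra_simps inner_commute)

lemma gcon_exp:
  assumes "transpose A = A"
  shows "gcon A v x = gcon A v y + grad_g A v y \<bullet> (x - y) + (x - y) \<bullet> (A *v (x - y))"
  using quad_diff[OF assms, of "x - v" "y - v"]
  unfolding gcon_def grad_g_def by simp

lemma pow_tangent:
  fixes u u0 :: real
  assumes "0 \<le> u" "0 \<le> u0"
  shows "u0 ^ k + real k * u0 ^ (k - 1) * (u - u0) \<le> u ^ k"
proof -
  have e: "u^k - u0^k = (u - u0) * (\<Sum>i<k. u0^(k - Suc i) * u^i)"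
    by (rule power_diff_sumr2)
  show ?thesis
  proof (cases "u0 \<le> u")
    case True
    have "(\<Sum>i<k. u0^(k - 1)) \<le> (\<Sum>i<k. u0^(k - Suc i) * u^i)"
    proof (rule sum_mono)
      fix i assume "i \<in> {..<k}"
      then have "u0^(k-1) = u0^(k - Suc i) * u0^i" by (simp add: power_add[symmetric])
      also have "\<dots> \<le> u0^(k - Suc i) * u^i"
        using True assms by (intro mult_left_mono power_mono) auto
      finally show "u0^(k-1) \<le> u0^(k - Suc i) * u^i" .
    qed
    then have "real k * u0^(k-1) \<le> (\<Sum>i<k. u0^(k - Suc i) * u^i)" by simp
    then have "(u - u0) * (real k * u0^(k-1)) \<le> (u - u0) * (\<Sum>i<k. u0^(k - Suc i) * u^i)"
      using True by (intro mult_left_mono) auto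
    then show ?thesis using e by (simp add: algebra_simps)
  next
    case False
    have "(\<Sum>i<k. u0^(k - Suc i) * u^i) \<le> (\<Sum>i<k. u0^(k - 1))"
    proof (rule sum_mono)
      fix i assume "i \<in> {..<k}"
      have "u0^(k - Suc i) * u^i \<le> u0^(k - Suc i) * u0^i"
        using False assms by (intro mult_left_mono power_mono) auto
      also have "\<dots> = u0^(k-1)" using \<open>i \<in> {..<k}\<close> by (simp add: power_add[symmetric])
      finally show "u0^(k - Suc i) * u^i \<le> u0^(k-1)" .
    qed
    then have "(\<Sum>i<k. u0^(k - Suc i) * u^i) \<le> real k * u0^(k-1)" by simp
    then have "(u - u0) * (real k * u0^(k-1)) \<le> (u - u0) * (\<Sum>i<k. u0^(k - Suc i) * u^i)"
      using False by (intro mult_left_mono_neg) auto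
    then show ?thesis using e by (simp add: algebra_simps)
  qed
qed


lemma mv_neg[simp]: "(M::real^'n^'m) *v (- x) = - (M *v x)"
  by (metis matrix_vector_mult_scaleR scaleR_minus1_left)

lemma cont_mv: "continuous_on S (\<lambda>x. (M::real^'n^'n) *v x)"
  by (simp add: linear_continuous_on matrix_vector_mul_bounded_linear)

lemma cont_gcon: "continuous_on S (gcon A v)"
  unfolding gcon_def
  by (intro continuous_intros continuous_on_compose2[OF cont_mv[of UNIV A]]) auto

lemma cont_fobj: "continuous_on S (fobj Q q)"
  unfolding fobj_def
  by (intro continuous_intros continuous_on_compose2[OF cont_mv[of UNIV Q]]) auto

lemma cont_Jk: "continuous_on S (Jk Q q A v m k)"
  unfolding Jk_def
  by (intro continuous_intros cont_fobj cont_gcon)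

lemma pd_lower:
  fixes A :: "real^'n^'n"
  assumes "sym_pd A"
  shows "\<exists>c>0. \<forall>x. c * (norm x)^2 \<le> x \<bullet> (A *v x)"
proof -
  let ?h = "\<lambda>x::real^'n. x \<bullet> (A *v x)"
  have cs: "compact (sphere (0::real^'n) 1)" by simp
  have "axis undefined (1::real) \<in> sphere (0::real^'n) 1" by (simp add: sphere_def dist_norm)
  then have ne: "sphere (0::real^'n) 1 \<noteq> {}" by blast
  have ch: "continuous_on (sphere 0 1) ?h"
    by (intro continuous_intros cont_mv)
  obtain x0 where x0: "x0 \<in> sphere 0 1" "\<forall>y\<in>sphere 0 1. ?h x0 \<le> ?h y"
    using continuous_attains_inf[OF cs ne ch] by blast
  have "x0 \<noteq> 0" using x0(1) by auto
  then have cpos: "0 < ?h x0" using assms unfolding sym_pd_def by auto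
  have "\<forall>x. ?h x0 * (norm x)^2 \<le> ?h x"
  proof
    fix x :: "real^'n"
    show "?h x0 * (norm x)^2 \<le> ?h x"
    proof (cases "x = 0")
      case True then show ?thesis by simp
    next
      case False
      let ?u = "(1 / norm x) *\<^sub>R x"
      have "?u \<in> sphere 0 1" using False by (simp add: sphere_def dist_norm)
      then have "?h x0 \<le> ?h ?u" using x0 by blast
      also have "?h ?u = ?h x / (norm x)^2"
        by (simp add: matrix_vector_mult_scaleR power2_eq_square)
      finally show ?thesis using False by (simp add: field_simps)
    qed
  qed
  then show ?thesis using cpos by blast
qed

lemma A_facts:
  assumes "sym_pd A"
  shows "transpose A = A" "\<And>x. 0 \<le> x \<bullet> (A *v x)" "\<And>x. 0 \<le> gcon A v x"
  using assms unfolding sym_pd_def gcon_def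
  by (metis inner_zero_left less_eq_real_def)+

lemma C_compact:
  assumes "sym_pd A"
  shows "compact (Cset A v)"
proof -
  obtain c where c: "c > 0" "\<forall>x. c * (norm x)^2 \<le> x \<bullet> (A *v x)"
    using pd_lower[OF assms] by blast
  have "Cset A v \<subseteq> cball v (1 / sqrt c)"
  proof
    fix x assume "x \<in> Cset A v"
    then have "c * (norm (x - v))^2 \<le> 1" using c(2)[rule_format, of "x - v"] unfolding Cset_def gcon_def by auto
    then have "(norm (x - v))^2 \<le> (1 / sqrt c)^2" using c(1) by (simp add: field_simps power_divide)
    then have "norm (x - v) \<le> 1 / sqrt c" using c(1) by (meson power2_le_imp_le real_sqrt_gt_zero divide_nonneg_nonneg less_eq_real_def zero_le_one)
    then show "x \<in> cball v (1 / sqrt c)" by (simp add: dist_norm norm_minus_commute)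
  qed
  then have "bounded (Cset A v)" using bounded_cball bounded_subset by blast
  moreover have "closed (Cset A v)"
    unfolding Cset_def by (intro closed_Collect_le cont_gcon continuous_on_const) 
  ultimately show ?thesis using compact_eq_bounded_closed by blast
qed

lemma v_in_C: "v \<in> Cset A v" by (simp add: Cset_def gcon_def)

lemma Jk_grad:
  assumes hQ: "sym_psd Q" and hA: "sym_pd A" and k: "1 \<le> k" and m: "0 \<le> m"
  shows "Jk Q q A v m k y + (grad_f Q q y + (m * gcon A v y ^ (k - 1)) *\<^sub>R grad_g A v y) \<bullet> (x - y)
         \<le> Jk Q q A v m k x"
proof -
  note Af = A_facts(1,2)[OF hA] A_facts(3)[OF hA, where v=v]
  have f: "fobj Q q y + grad_f Q q y \<bullet> (x - y) \<le> fobj Q q x"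
    using fobj_exp[OF hQ, of q x y] hQ unfolding sym_psd_def by auto
  have g: "gcon A v y + grad_g A v y \<bullet> (x - y) \<le> gcon A v x"
    using gcon_exp[OF Af(1), of v x y] Af(2)[of "x - y"] by auto
  have t: "gcon A v y ^ k + real k * gcon A v y ^ (k - 1) * (gcon A v x - gcon A v y) \<le> gcon A v x ^ k"
    using pow_tangent Af(3) by blast
  have "real k * gcon A v y ^ (k - 1) * (grad_g A v y \<bullet> (x - y))
     \<le> real k * gcon A v y ^ (k - 1) * (gcon A v x - gcon A v y)"
    using g Af(3)[of y] by (intro mult_left_mono) auto
  with t have t2: "gcon A v y ^ k + real k * gcon A v y ^ (k - 1) * (grad_g A v y \<bullet> (x - y)) \<le> gcon A v x ^ k"
    by linarith
  have kp: "0 < real k" using k by simp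
  have "(m / real k) * (gcon A v y ^ k + real k * gcon A v y ^ (k - 1) * (grad_g A v y \<bullet> (x - y)))
        \<le> (m / real k) * gcon A v x ^ k"
    using t2 m kp by (intro mult_left_mono) auto
  then have "(m / real k) * gcon A v y ^ k + m * gcon A v y ^ (k - 1) * (grad_g A v y \<bullet> (x - y))
        \<le> (m / real k) * gcon A v x ^ k"
    using kp by (simp add: algebra_simps)
  with f show ?thesis unfolding Jk_def by (simp add: inner_add_left algebra_simps)
qed

lemma lin_aux1: "(a::real) = z + b + (1/2) * c \<Longrightarrow> a2 = z - b + (1/2) * c \<Longrightarrow> 0 \<le> c \<Longrightarrow> z \<le> (a + a2) / 2"
  by (simp add: field_simps)
lemma lin_aux2: "(a::real) = z + b + c \<Longrightarrow> a2 = z - b + c \<Longrightarrow> 0 < c \<Longrightarrow> z < (a + a2) / 2"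
  by (simp add: field_simps)
lemma lin_aux3: "(M::real) + t1 \<le> a \<Longrightarrow> M + t2 \<le> b \<Longrightarrow> t1 + t2 = 0 \<Longrightarrow> M \<le> (a + b) / 2"
  by (simp add: field_simps)

lemma f_mid:
  assumes hQ: "sym_psd Q"
  shows "fobj Q q ((1/2) *\<^sub>R (x1 + x2)) \<le> (fobj Q q x1 + fobj Q q x2) / 2"
proof -
  let ?z = "(1/2) *\<^sub>R (x1 + x2)"
  let ?d = "(1/2) *\<^sub>R (x1 - x2)"
  have e1: "x1 - ?z = ?d" by (simp add: vec_eq_iff field_simps)
  have e2: "x2 - ?z = - ?d" by (simp add: vec_eq_iff field_simps)
  have "fobj Q q x1 = fobj Q q ?z + grad_f Q q ?z \<bullet> ?d + (1/2) * (?d \<bullet> (Q *v ?d))"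
    using fobj_exp[OF hQ, of q x1 ?z] e1 by simp
  moreover have "fobj Q q x2 = fobj Q q ?z - grad_f Q q ?z \<bullet> ?d + (1/2) * (?d \<bullet> (Q *v ?d))"
    using fobj_exp[OF hQ, of q x2 ?z] e2 by (simp add: matrix_vector_mult_scaleR)
  moreover have "0 \<le> ?d \<bullet> (Q *v ?d)" using hQ unfolding sym_psd_def by blast
  ultimately show ?thesis by (rule lin_aux1)
qed

lemma g_mid:
  assumes hA: "sym_pd A" and ne: "x1 \<noteq> x2"
  shows "gcon A v ((1/2) *\<^sub>R (x1 + x2)) < (gcon A v x1 + gcon A v x2) / 2"
proof -
  note Af = A_facts(1,2)[OF hA] A_facts(3)[OF hA, where v=v]
  let ?z = "(1/2) *\<^sub>R (x1 + x2)"
  let ?d = "(1/2) *\<^sub>R (x1 - x2)"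
  have e1: "x1 - ?z = ?d" by (simp add: vec_eq_iff field_simps)
  have e2: "x2 - ?z = - ?d" by (simp add: vec_eq_iff field_simps)
  have "gcon A v x1 = gcon A v ?z + grad_g A v ?z \<bullet> ?d + (?d \<bullet> (A *v ?d))"
    using gcon_exp[OF Af(1), of v x1 ?z] e1 by simp
  moreover have "gcon A v x2 = gcon A v ?z - grad_g A v ?z \<bullet> ?d + (?d \<bullet> (A *v ?d))"
    using gcon_exp[OF Af(1), of v x2 ?z] e2 by (simp add: matrix_vector_mult_scaleR)
  moreover have "?d \<noteq> 0" using ne by simp
  then have "0 < ?d \<bullet> (A *v ?d)" using hA unfolding sym_pd_def by blast
  ultimately show ?thesis by (rule lin_aux2)
qed

lemma Jk_mid:
  assumes hQ: "sym_psd Q" and hA: "sym_pd A" and k: "1 \<le> k" and m: "0 < m" and ne: "x1 \<noteq> x2"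
  shows "Jk Q q A v m k ((1/2) *\<^sub>R (x1 + x2)) < (Jk Q q A v m k x1 + Jk Q q A v m k x2) / 2"
proof -
  note Af = A_facts(1,2)[OF hA] A_facts(3)[OF hA, where v=v]
  let ?z = "(1/2) *\<^sub>R (x1 + x2)"
  let ?M = "(gcon A v x1 + gcon A v x2) / 2"
  have M0: "0 \<le> ?M" using Af(3)[of x1] Af(3)[of x2] by simp
  have "gcon A v ?z ^ k < ?M ^ k"
    using g_mid[OF hA ne] Af(3)[of ?z] k by (intro power_strict_mono) auto
  moreover have "?M ^ k \<le> (gcon A v x1 ^ k + gcon A v x2 ^ k) / 2"
  proof -
    have a: "?M ^ k + real k * ?M ^ (k-1) * (gcon A v x1 - ?M) \<le> gcon A v x1 ^ k"
      using pow_tangent[OF Af(3) M0] by blast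
    have b: "?M ^ k + real k * ?M ^ (k-1) * (gcon A v x2 - ?M) \<le> gcon A v x2 ^ k"
      using pow_tangent[OF Af(3) M0] by blast
    have "real k * ?M ^ (k-1) * (gcon A v x1 - ?M) + real k * ?M ^ (k-1) * (gcon A v x2 - ?M) = 0"
      by (simp add: algebra_simps)
    with a b show ?thesis by (rule lin_aux3)
  qed
  ultimately have gk: "gcon A v ?z ^ k < (gcon A v x1 ^ k + gcon A v x2 ^ k) / 2" by linarith
  have mk: "0 < m / real k" using m k by simp
  have "(m / real k) * gcon A v ?z ^ k < (m / real k) * ((gcon A v x1 ^ k + gcon A v x2 ^ k) / 2)"
    using gk mk by (rule mult_strict_left_mono)
  with f_mid[OF hQ, of q x1 x2] show ?thesis unfolding Jk_def by (simp add: algebra_simps)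
qed

lemma Jk_unique:
  assumes hQ: "sym_psd Q" and hA: "sym_pd A" and k: "1 \<le> k" and m: "0 < m"
    and h1: "\<forall>y. Jk Q q A v m k x1 \<le> Jk Q q A v m k y"
    and h2: "\<forall>y. Jk Q q A v m k x2 \<le> Jk Q q A v m k y"
  shows "x1 = x2"
proof (rule ccontr)
  assume ne: "x1 \<noteq> x2"
  have "Jk Q q A v m k x1 = Jk Q q A v m k x2" using h1 h2 by (meson order_antisym)
  moreover have "Jk Q q A v m k x1 \<le> Jk Q q A v m k ((1/2) *\<^sub>R (x1 + x2))" using h1 by blast
  moreover note Jk_mid[OF hQ hA k m ne, of q v]
  ultimately show False by simp
qed


lemma Jk_line:
  assumes hQ: "sym_psd Q" and hA: "sym_pd A"
  shows "Jk Q q A v m k (y + s *\<^sub>R d) = fobj Q q y + s * (grad_f Q q y \<bullet> d) + s^2 * ((1/2) * (d \<bullet> (Q *v d)))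
     + (m / real k) * (gcon A v y + s * (grad_g A v y \<bullet> d) + s^2 * (d \<bullet> (A *v d))) ^ k"
proof -
  have Af: "transpose A = A" using hA unfolding sym_pd_def by blast
  have "fobj Q q (y + s *\<^sub>R d) = fobj Q q y + s * (grad_f Q q y \<bullet> d) + s^2 * ((1/2) * (d \<bullet> (Q *v d)))"
    using fobj_exp[OF hQ, of q "y + s *\<^sub>R d" y] by (simp add: matrix_vector_mult_scaleR power2_eq_square)
  moreover have "gcon A v (y + s *\<^sub>R d) = gcon A v y + s * (grad_g A v y \<bullet> d) + s^2 * (d \<bullet> (A *v d))"
    using gcon_exp[OF Af, of v "y + s *\<^sub>R d" y] by (simp add: matrix_vector_mult_scaleR power2_eq_square)
  ultimately show ?thesis unfolding Jk_def by simp
qed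

lemma gamma_small:
  fixes g0 a b :: real
  assumes "0 \<le> b" and "g0 \<le> 1" and "g0 < 1 \<or> a < 0"
  shows "\<exists>d2>0. \<forall>s. 0 < s \<and> s < d2 \<longrightarrow> g0 + s * a + s^2 * b \<le> 1"
proof (cases "a < 0")
  case True
  let ?d = "- a / (b + 1)"
  have "?d > 0" using True assms(1) by (intro divide_pos_pos) auto
  moreover have "g0 + s * a + s^2 * b \<le> 1" if "0 < s" "s < ?d" for s
  proof -
    have "s * (b + 1) < - a" using that assms(1) by (simp add: field_simps)
    then have "s * b < - a" using that by (simp add: algebra_simps)
    then have "s * (s * b) \<le> s * (- a)" using that by (intro mult_left_mono) auto
    then show ?thesis using assms(2) by (simp add: power2_eq_square algebra_simps)
  qed
  ultimately show ?thesis by blast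
next
  case False
  then have g0: "g0 < 1" using assms(3) by blast
  let ?d = "min 1 ((1 - g0) / (\<bar>a\<bar> + b + 1))"
  have "?d > 0" using g0 assms(1) by simp
  moreover have "g0 + s * a + s^2 * b \<le> 1" if "0 < s" "s < ?d" for s
  proof -
    have s1: "s < 1" and s2: "s * (\<bar>a\<bar> + b + 1) < 1 - g0" using that assms(1) by (auto simp: field_simps)
    have "s * a \<le> s * \<bar>a\<bar>" using that by (intro mult_left_mono) auto
    moreover have "s^2 * b \<le> s * b" using that s1 assms(1) by (simp add: power2_eq_square mult_right_mono)
    moreover have "0 \<le> s" using that by simp
    ultimately show ?thesis using s2 by (simp add: algebra_simps) 
  qed
  ultimately show ?thesis by blast
qed

lemma local_step:
  assumes hQ: "sym_psd Q" and hA: "sym_pd A" and k: "1 \<le> k" and m: "0 < m"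
    and gy: "gcon A v y \<le> 1"
    and wd: "(grad_f Q q y + (m * gcon A v y ^ (k - 1)) *\<^sub>R grad_g A v y) \<bullet> d < 0"
    and alt: "gcon A v y < 1 \<or> grad_g A v y \<bullet> d < 0"
  shows "\<exists>s>0. gcon A v (y + s *\<^sub>R d) \<le> 1 \<and> Jk Q q A v m k (y + s *\<^sub>R d) < Jk Q q A v m k y"
proof -
  have Af: "transpose A = A" using hA unfolding sym_pd_def by blast
  define c1 where "c1 = grad_f Q q y \<bullet> d"
  define c2 where "c2 = (1/2) * (d \<bullet> (Q *v d))"
  define g0 where "g0 = gcon A v y"
  define a where "a = grad_g A v y \<bullet> d"
  define b where "b = d \<bullet> (A *v d)"
  define \<phi> where "\<phi> = (\<lambda>s. fobj Q q y + s * c1 + s^2 * c2 + (m / real k) * (g0 + s * a + s^2 * b) ^ k)"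
  have phiJ: "\<And>s. Jk Q q A v m k (y + s *\<^sub>R d) = \<phi> s"
    unfolding \<phi>_def c1_def c2_def g0_def a_def b_def using Jk_line[OF hQ hA] by blast
  have gam: "gcon A v (y + s *\<^sub>R d) = g0 + s * a + s^2 * b" for s
    unfolding g0_def a_def b_def using gcon_exp[OF Af, of v "y + s *\<^sub>R d" y]
    by (simp add: matrix_vector_mult_scaleR power2_eq_square)
  have D: "DERIV \<phi> 0 :> c1 + (m / real k) * (real k * g0 ^ (k - 1) * a)"
    unfolding \<phi>_def
    by (auto intro!: derivative_eq_intros)
  have "c1 + (m / real k) * (real k * g0 ^ (k - 1) * a) = (grad_f Q q y + (m * gcon A v y ^ (k - 1)) *\<^sub>R grad_g A v y) \<bullet> d"
    using k unfolding c1_def g0_def a_def by (simp add: inner_add_left)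
  then have "c1 + (m / real k) * (real k * g0 ^ (k - 1) * a) < 0" using wd by simp
  from DERIV_neg_dec_right[OF D this] obtain d1 where d1: "d1 > 0" "\<forall>h>0. h < d1 \<longrightarrow> \<phi> 0 > \<phi> (0 + h)" by blast
  have b0: "0 \<le> b" unfolding b_def using hA unfolding sym_pd_def by (metis inner_zero_left order_refl less_eq_real_def matrix_vector_mult_0_right)
  obtain d2 where d2: "d2 > 0" "\<forall>s. 0 < s \<and> s < d2 \<longrightarrow> g0 + s * a + s^2 * b \<le> 1"
    using gamma_small[OF b0, of g0 a] gy alt unfolding g0_def a_def by blast
  let ?s = "min d1 d2 / 2"
  have "?s > 0" "?s < d1" "?s < d2" using d1 d2 by auto
  then have "gcon A v (y + ?s *\<^sub>R d) \<le> 1" "Jk Q q A v m k (y + ?s *\<^sub>R d) < Jk Q q A v m k y"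
    using d1(2)[rule_format, of ?s] d2(2)[rule_format, of ?s] gam[of ?s] phiJ[of ?s] phiJ[of 0] by auto
  then show ?thesis using \<open>?s > 0\<close> by blast
qed

lemma Jk_in_C:
  assumes hQ: "sym_psd Q" and hA: "sym_pd A" and k: "1 \<le> k" and m: "0 < m"
    and hreq: "requirement1 Q q A v m"
    and hx: "\<forall>y. Jk Q q A v m k x \<le> Jk Q q A v m k y"
  shows "x \<in> Cset A v"
proof (rule ccontr)
  assume xC: "x \<notin> Cset A v"
  obtain y where y: "y \<in> Cset A v" "\<forall>z\<in>Cset A v. Jk Q q A v m k y \<le> Jk Q q A v m k z"
    using continuous_attains_inf[OF C_compact[OF hA] _ cont_Jk[of "Cset A v" Q q A v m k]] v_in_C[of v A] by blast
  have "x \<noteq> y" using xC y(1) by blast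
  have lt: "Jk Q q A v m k x < Jk Q q A v m k y"
  proof (rule ccontr)
    assume "\<not> ?thesis"
    then have "\<forall>z. Jk Q q A v m k y \<le> Jk Q q A v m k z" using hx by (meson order_trans not_less)
    then have "x = y" using Jk_unique[OF hQ hA k m hx] by blast
    then show False using \<open>x \<noteq> y\<close> by blast
  qed
  define w where "w = grad_f Q q y + (m * gcon A v y ^ (k - 1)) *\<^sub>R grad_g A v y"
  define e where "e = x - y"
  have "Jk Q q A v m k y + w \<bullet> e \<le> Jk Q q A v m k x"
    unfolding w_def e_def using Jk_grad[OF hQ hA k] m by simp
  then have we: "w \<bullet> e < 0" using lt by simp
  have gy: "gcon A v y \<le> 1" using y(1) unfolding Cset_def by simp
  obtain d where d: "w \<bullet> d < 0" "gcon A v y < 1 \<or> grad_g A v y \<bullet> d < 0"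
  proof (cases "gcon A v y < 1")
    case True
    then show ?thesis using that[of e] we by blast
  next
    case False
    then have g1: "gcon A v y = 1" using gy by simp
    let ?gg = "grad_g A v y"
    have "?gg \<noteq> 0"
    proof
      assume "?gg = 0"
      then have "A *v (y - v) = 0" unfolding grad_g_def by simp
      then have "gcon A v y = 0" unfolding gcon_def by simp
      then show False using g1 by simp
    qed
    then have gpos: "0 < ?gg \<bullet> ?gg" by simp
    have w1: "w = grad_f Q q y + m *\<^sub>R ?gg" unfolding w_def using g1 by simp
    have req: "0 \<le> ?gg \<bullet> w" using hreq g1 unfolding requirement1_def w1 by blast
    define lam where "lam = (\<bar>?gg \<bullet> e\<bar> + 1) / (?gg \<bullet> ?gg)"
    have l0: "0 \<le> lam" unfolding lam_def using gpos by simp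
    have "w \<bullet> (e - lam *\<^sub>R ?gg) = w \<bullet> e - lam * (?gg \<bullet> w)" by (simp add: inner_diff_right inner_commute)
    also have "\<dots> \<le> w \<bullet> e" using l0 req by simp
    finally have 1: "w \<bullet> (e - lam *\<^sub>R ?gg) < 0" using we by simp
    have "?gg \<bullet> (e - lam *\<^sub>R ?gg) = ?gg \<bullet> e - (\<bar>?gg \<bullet> e\<bar> + 1)"
      unfolding lam_def using gpos by (simp add: inner_diff_right)
    then have 2: "?gg \<bullet> (e - lam *\<^sub>R ?gg) < 0" by simp
    show ?thesis using that[of "e - lam *\<^sub>R ?gg"] 1 2 by blast
  qed
  obtain s where s: "s > 0" "gcon A v (y + s *\<^sub>R d) \<le> 1" "Jk Q q A v m k (y + s *\<^sub>R d) < Jk Q q A v m k y"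
    using local_step[OF hQ hA k m gy _ d(2)] d(1) unfolding w_def by blast
  have "y + s *\<^sub>R d \<in> Cset A v" using s(2) unfolding Cset_def by simp
  then show False using y(2) s(3) by fastforce
qed

lemma xk_bounds:
  assumes hQ: "sym_psd Q" and hA: "sym_pd A" and k: "1 \<le> k" and m: "0 < m"
    and hx: "\<forall>y. Jk Q q A v m k x \<le> Jk Q q A v m k y"
    and xC: "x \<in> Cset A v" and zC: "z \<in> Cset A v" and fz: "fobj Q q z \<le> fobj Q q x"
  shows "gcon A v x \<le> gcon A v z" "fobj Q q x \<le> fobj Q q z + m / real k"
proof -
  have g0: "0 \<le> gcon A v x" "0 \<le> gcon A v z" using A_facts(3)[OF hA] by auto
  have gz1: "gcon A v z \<le> 1" using zC unfolding Cset_def by simp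
  have J: "fobj Q q x + (m / real k) * gcon A v x ^ k \<le> fobj Q q z + (m / real k) * gcon A v z ^ k"
    using hx unfolding Jk_def by blast
  have mk: "0 < m / real k" using m k by simp
  have "(m / real k) * gcon A v x ^ k \<le> (m / real k) * gcon A v z ^ k" using J fz by linarith
  then have "gcon A v x ^ k \<le> gcon A v z ^ k" using mk by (metis mult_le_cancel_left_pos)
  then have "gcon A v x ^ Suc (k - 1) \<le> gcon A v z ^ Suc (k - 1)" using k by simp
  then show "gcon A v x \<le> gcon A v z" using power_le_imp_le_base g0 by blast
  have "gcon A v z ^ k \<le> 1" using power_le_one[OF g0(2) gz1] .
  then have "(m / real k) * gcon A v z ^ k \<le> m / real k" using mk mult_left_le[of "gcon A v z ^ k" "m / real k"] by simp
  moreover have "0 \<le> (m / real k) * gcon A v x ^ k" using mk g0 by (intro mult_nonneg_nonneg zero_le_power) auto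
  ultimately show "fobj Q q x \<le> fobj Q q z + m / real k" using J by linarith
qed

theorem proposition1:
  fixes Q A :: "real^'n^'n" and q v :: "real^'n" and m :: real
    and xk :: "nat \<Rightarrow> real^'n"
  assumes hQ: "sym_psd Q"
    and hA: "sym_pd A"
    and hm: "0 < m"
    and hreq: "requirement1 Q q A v m"
    and hxk: "\<And>k. k \<ge> 1 \<Longrightarrow> \<forall>y. Jk Q q A v m k (xk k) \<le> Jk Q q A v m k y"
  shows "(\<forall>k\<ge>1. \<exists>!x. \<forall>y. Jk Q q A v m k x \<le> Jk Q q A v m k y)
    \<and> (\<forall>k\<ge>1. xk k \<in> Cset A v)
    \<and> (\<exists>xs. (\<forall>z. (z \<in> Xstar Q q A v \<and> (\<forall>y \<in> Xstar Q q A v. gcon A v z \<le> gcon A v y))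
                   \<longleftrightarrow> z = xs)
           \<and> xs \<in> Xstar Q q A v
           \<and> xk \<longlonglongrightarrow> xs)"
proof -
  let ?C = "Cset A v"
  let ?f = "fobj Q q"
  let ?g = "gcon A v"
  let ?X = "Xstar Q q A v"
  have P1: "\<forall>k\<ge>1. \<exists>!x. \<forall>y. Jk Q q A v m k x \<le> Jk Q q A v m k y"
  proof (intro allI impI)
    fix k :: nat assume k: "k \<ge> 1"
    show "\<exists>!x. \<forall>y. Jk Q q A v m k x \<le> Jk Q q A v m k y"
      using hxk[OF k] Jk_unique[OF hQ hA k hm] by blast
  qed
  have P2: "\<forall>k\<ge>1. xk k \<in> ?C"
    using Jk_in_C[OF hQ hA _ hm hreq hxk] by blast
  have Ccomp: "compact ?C" by (rule C_compact[OF hA])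
  obtain x0 where x0: "x0 \<in> ?C" "\<forall>y\<in>?C. ?f x0 \<le> ?f y"
    using continuous_attains_inf[OF Ccomp _ cont_fobj[of ?C Q q]] v_in_C[of v A] by blast
  define fs where "fs = ?f x0"
  have Xchar: "x \<in> ?X \<longleftrightarrow> x \<in> ?C \<and> ?f x \<le> fs" for x
    unfolding Xstar_def fs_def using x0 by (auto intro: order_trans)
  have Xeq: "?X = ?C \<inter> {x. ?f x \<le> fs}" using Xchar by blast
  have Xcomp: "compact ?X" unfolding Xeq
    by (intro compact_Int_closed Ccomp closed_Collect_le cont_fobj continuous_on_const)
  have "x0 \<in> ?X" using Xchar x0 fs_def by simp
  then have Xne: "?X \<noteq> {}" by blast
  obtain xs where xs: "xs \<in> ?X" "\<forall>y\<in>?X. ?g xs \<le> ?g y"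
    using continuous_attains_inf[OF Xcomp Xne cont_gcon[of ?X A v]] by blast
  have uniq: "z = xs" if z: "z \<in> ?X" "\<forall>y\<in>?X. ?g z \<le> ?g y" for z
  proof (rule ccontr)
    assume ne: "z \<noteq> xs"
    let ?w = "(1/2) *\<^sub>R (z + xs)"
    have geq: "?g z = ?g xs" using z xs by (meson order_antisym)
    have gm: "?g ?w < (?g z + ?g xs) / 2" using g_mid[OF hA ne] by blast
    have "?g z \<le> 1" "?g xs \<le> 1" using z(1) xs(1) Xchar unfolding Cset_def by auto
    then have "?w \<in> ?C" using gm unfolding Cset_def by simp
    moreover have "?f ?w \<le> fs"
      using f_mid[OF hQ, of q z xs] z(1) xs(1) Xchar by fastforce
    ultimately have "?w \<in> ?X" using Xchar by blast
    then have "?g xs \<le> ?g ?w" using xs(2) by blast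
    then show False using gm geq by simp
  qed
  have P3a: "\<forall>z. (z \<in> ?X \<and> (\<forall>y\<in>?X. ?g z \<le> ?g y)) \<longleftrightarrow> z = xs"
    using uniq xs by blast
  have xsC: "xs \<in> ?C" and fxs: "?f xs \<le> fs" using xs(1) Xchar by auto
  have bnd: "?g (xk k) \<le> ?g xs \<and> ?f (xk k) \<le> fs + m / real k" if k: "k \<ge> 1" for k
  proof -
    have xC: "xk k \<in> ?C" using P2 k by blast
    have "fs \<le> ?f (xk k)" using x0(2) xC fs_def by blast
    then have fz: "?f xs \<le> ?f (xk k)" using fxs by linarith
    have "?f xs \<le> fs" using fxs .
    then show ?thesis using xk_bounds[OF hQ hA k hm hxk[OF k] xC xsC fz] by linarith
  qed
  have P3c: "xk \<longlonglongrightarrow> xs"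
    unfolding tendsto_iff
  proof (intro allI impI)
    fix e :: real assume e: "e > 0"
    let ?K = "?C \<inter> {x. e \<le> dist x xs}"
    have Kcomp: "compact ?K"
      by (intro compact_Int_closed Ccomp closed_Collect_le continuous_on_const continuous_intros)
    let ?phi = "\<lambda>x. max (?f x - fs) (?g x - ?g xs)"
    have ev1: "eventually (\<lambda>n. n \<ge> (1::nat)) sequentially" by (rule eventually_ge_at_top)
    show "eventually (\<lambda>n. dist (xk n) xs < e) sequentially"
    proof (cases "?K = {}")
      case True
      show ?thesis using ev1
      proof (rule eventually_mono)
        fix n :: nat assume "n \<ge> 1"
        then have "xk n \<in> ?C" using P2 by blast
        then show "dist (xk n) xs < e" using True by (metis (mono_tags, lifting) IntI mem_Collect_eq empty_iff not_le)
      qed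
    next
      case False
      have cphi: "continuous_on ?K ?phi"
        by (intro continuous_intros cont_fobj cont_gcon)
      obtain x1 where x1: "x1 \<in> ?K" "\<forall>y\<in>?K. ?phi x1 \<le> ?phi y"
        using continuous_attains_inf[OF Kcomp False cphi] by blast
      have dpos: "0 < ?phi x1"
      proof (rule ccontr)
        assume "\<not> ?thesis"
        then have h: "?f x1 \<le> fs" "?g x1 \<le> ?g xs" by auto
        have x1X: "x1 \<in> ?X" using Xchar x1(1) h(1) by blast
        have "\<forall>y\<in>?X. ?g x1 \<le> ?g y" using h(2) xs(2) by (meson order_trans)
        then have "x1 = xs" using uniq x1X by blast
        then show False using x1(1) e by simp
      qed
      have ev2: "eventually (\<lambda>n. m / real n < ?phi x1) sequentially"
        using order_tendstoD(2)[OF lim_const_over_n[of m] dpos] by simp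
      show ?thesis using ev1 ev2
      proof (rule eventually_elim2)
        fix n :: nat assume n: "n \<ge> 1" "m / real n < ?phi x1"
        have b: "?g (xk n) \<le> ?g xs" "?f (xk n) \<le> fs + m / real n" using bnd[OF n(1)] by auto
        have "?phi (xk n) < ?phi x1" using b n(2) dpos by auto
        then have "xk n \<notin> ?K" using x1(2) by (meson not_le)
        moreover have "xk n \<in> ?C" using P2 n(1) by blast
        ultimately show "dist (xk n) xs < e" by auto
      qed
    qed
  qed
  show ?thesis using P1 P2 P3a xs(1) P3c by blast
qed
end
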